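(* In the general DDE setting described in the context, suppose that $F$ maps every subset of $U$ that is bounded with respect to $\|\cdot\|_0$ into a bounded subset of $\mathbb R^N$, and that there exists $K$ such that for every $\phi\in X_+$ there is $T=T(\phi)\ge0$ with $\|x^\phi_t\|_0\le K$ for all $t\ge T$. Then there exists $K'$ such that for every $\phi\in X_+$ there is $t_0=t_0(\phi)\ge0$ with $\|x^\phi_t\|_1\le K'$ for all $t\ge t_0$; i.e. $S_+$ is point dissipative.
   Context: Let $N\in\mathbb N$, $h>0$, $C:=C([-h,0],\mathbb R^N)$ with $\|\phi\|_0:=\max_{\theta\in[-h,0]}|\phi(\theta)|$, $C^1:=C^1([-h,0],\mathbb R^N)$ with $\|\phi\|_1:=\|\phi\|_0+\|\phi'\|_0$; $x_t(s):=x(t+s)$, $s\in[-h,0]$. Let $U\subset C^1$ be open and $F:U\to\mathbb R^N$. Consider $x'(t)=F(x_t)$, $t>0$, $x_0=\phi$; a solution on $[-h,t_* )$ is a $C^1$ map $x$ with $x_0=\phi$, $x_t\in U$ and $x'(t)=F(x_t)$ for $t\in(0,t_* )$. Assume $F$ satisfies (S): $F$ is $C^1$, each $DF(\phi)$ extends to a linear map $D_eF(\phi):C\to\mathbb R^N$ and $(\phi,\chi)\mapsto D_eF(\phi)\chi$ is continuous on $U\times C$. Let $X:=\{\phi\in U:\phi'(0)=F(\phi)\}$; each $\phi\in X$ has a maximal solution $x^\phi$ on $[-h,t_\phi)$ with segments in $X$. Let $U_+\subset U$ be such that $X_+:=X\cap U_+\neq\emptyset$, $x^\phi_t\in X_+$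 for all $\phi\in X_+$, $t\in[0,t_\phi)$; $F$ is (sLb) on $U_+$ (for each $\|\cdot\|_1$-bounded $B\subset U_+$ there is $L_B$ with $|F(\phi)-F(\chi)|\le L_B\|\phi-\chi\|_0$ on $B$); and for every $\phi\in X_+$ the orbit $\{x^\phi_t:t\in[0,t_\phi)\}$ is $\|\cdot\|_1$-bounded with closure in $U$. Under these assumptions $t_\phi=\infty$ for $\phi\in X_+$ and $S_+(t,\phi):=x^\phi_t$ is a continuous semiflow on $X_+$. *)

theory Defs
  imports "HOL-Analysis.Analysis"
begin

text \<open>Segments are functions real => 'a (with 'a a Euclidean space, playing the role of R^N),
  normalised to vanish outside [-h,0].\<close>

definition Cspace :: "real \<Rightarrow> (real \<Rightarrow> 'a::euclidean_space) set" where
  "Cspace h = {\<phi>. continuous_on {-h..0} \<phi> \<and> (\<forall>s. s \<notin> {-h..0} \<longrightarrow> \<phi> s = 0)}"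

definition C1space :: "real \<Rightarrow> (real \<Rightarrow> 'a::euclidean_space) set" where
  "C1space h = {\<phi>. \<phi> \<in> Cspace h \<and>
     (\<exists>\<phi>'. (\<forall>s\<in>{-h..0}. (\<phi> has_vector_derivative \<phi>' s) (at s within {-h..0}))
           \<and> continuous_on {-h..0} \<phi>')}"

definition dseg :: "real \<Rightarrow> (real \<Rightarrow> 'a::euclidean_space) \<Rightarrow> real \<Rightarrow> 'a" where
  "dseg h \<phi> = (\<lambda>s. if s \<in> {-h..0} then vector_derivative \<phi> (at s within {-h..0}) else 0)"

definition norm0 :: "real \<Rightarrow> (real \<Rightarrow> 'a::euclidean_space) \<Rightarrow> real" where
  "norm0 h \<phi> = (SUP s\<in>{-h..0}. norm (\<phi> s))"

definition norm1 :: "real \<Rightarrow> (real \<Rightarrow> 'a::euclidean_space) \<Rightarrow> real" where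
  "norm1 h \<phi> = norm0 h \<phi> + norm0 h (dseg h \<phi>)"

definition seg :: "real \<Rightarrow> (real \<Rightarrow> 'a::euclidean_space) \<Rightarrow> real \<Rightarrow> real \<Rightarrow> 'a" where
  "seg h x t = (\<lambda>s. if s \<in> {-h..0} then x (t + s) else 0)"

definition open1 :: "real \<Rightarrow> (real \<Rightarrow> 'a::euclidean_space) set \<Rightarrow> bool" where
  "open1 h U \<longleftrightarrow> U \<subseteq> C1space h \<and>
     (\<forall>\<phi>\<in>U. \<exists>e>0. \<forall>\<psi>\<in>C1space h. norm1 h (\<lambda>s. \<psi> s - \<phi> s) < e \<longrightarrow> \<psi> \<in> U)"

definition closure1 :: "real \<Rightarrow> (real \<Rightarrow> 'a::euclidean_space) set \<Rightarrow> (real \<Rightarrow> 'a) set" where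
  "closure1 h A = {\<psi>. \<psi> \<in> C1space h \<and> (\<forall>e>0. \<exists>\<xi>\<in>A. norm1 h (\<lambda>s. \<xi> s - \<psi> s) < e)}"

definition bounded1 :: "real \<Rightarrow> (real \<Rightarrow> 'a::euclidean_space) set \<Rightarrow> bool" where
  "bounded1 h B \<longleftrightarrow> (\<exists>M. \<forall>\<phi>\<in>B. norm1 h \<phi> \<le> M)"

definition bounded0 :: "real \<Rightarrow> (real \<Rightarrow> 'a::euclidean_space) set \<Rightarrow> bool" where
  "bounded0 h B \<longleftrightarrow> (\<exists>M. \<forall>\<phi>\<in>B. norm0 h \<phi> \<le> M)"

definition linear_on :: "(real \<Rightarrow> 'a::euclidean_space) set \<Rightarrow> ((real \<Rightarrow> 'a) \<Rightarrow> 'a) \<Rightarrow> bool" where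
  "linear_on V L \<longleftrightarrow> (\<forall>\<xi>\<in>V. \<forall>\<eta>\<in>V. \<forall>c::real.
      L (\<lambda>s. \<xi> s + \<eta> s) = L \<xi> + L \<eta> \<and> L (\<lambda>s. c *\<^sub>R \<xi> s) = c *\<^sub>R L \<xi>)"

definition frechet1 :: "real \<Rightarrow> ((real \<Rightarrow> 'a::euclidean_space) \<Rightarrow> 'a) \<Rightarrow> (real \<Rightarrow> 'a)
                         \<Rightarrow> ((real \<Rightarrow> 'a) \<Rightarrow> 'a) \<Rightarrow> bool" where
  "frechet1 h F \<phi> L \<longleftrightarrow> linear_on (C1space h) L \<and>
     (\<exists>M. \<forall>\<xi>\<in>C1space h. norm (L \<xi>) \<le> M * norm1 h \<xi>) \<and>
     (\<forall>e>0. \<exists>d>0. \<forall>\<psi>\<in>C1space h. norm1 h (\<lambda>s. \<psi> s - \<phi> s) < d \<longrightarrow>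
        norm (F \<psi> - F \<phi> - L (\<lambda>s. \<psi> s - \<phi> s)) \<le> e * norm1 h (\<lambda>s. \<psi> s - \<phi> s))"

definition condS :: "real \<Rightarrow> (real \<Rightarrow> 'a::euclidean_space) set \<Rightarrow> ((real \<Rightarrow> 'a) \<Rightarrow> 'a) \<Rightarrow> bool" where
  "condS h U F \<longleftrightarrow>
    (\<exists>DF DeF.
      (\<forall>\<phi>\<in>U. frechet1 h F \<phi> (DF \<phi>)) \<and>
      (\<forall>\<phi>\<in>U. \<forall>e>0. \<exists>d>0. \<forall>\<psi>\<in>U. norm1 h (\<lambda>s. \<psi> s - \<phi> s) < d \<longrightarrow>
          (\<forall>\<xi>\<in>C1space h. norm (DF \<psi> \<xi> - DF \<phi> \<xi>) \<le> e * norm1 h \<xi>)) \<and>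
      (\<forall>\<phi>\<in>U. linear_on (Cspace h) (DeF \<phi>) \<and> (\<forall>\<xi>\<in>C1space h. DeF \<phi> \<xi> = DF \<phi> \<xi>)) \<and>
      (\<forall>\<phi>\<in>U. \<forall>\<xi>\<in>Cspace h. \<forall>e>0. \<exists>d>0. \<forall>\<psi>\<in>U. \<forall>\<eta>\<in>Cspace h.
          norm1 h (\<lambda>s. \<psi> s - \<phi> s) < d \<and> norm0 h (\<lambda>s. \<eta> s - \<xi> s) < d \<longrightarrow>
          norm (DeF \<psi> \<eta> - DeF \<phi> \<xi>) < e))"

definition Xset :: "real \<Rightarrow> (real \<Rightarrow> 'a::euclidean_space) set \<Rightarrow> ((real \<Rightarrow> 'a) \<Rightarrow> 'a) \<Rightarrow> (real \<Rightarrow> 'a) set" where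
  "Xset h U F = {\<phi>\<in>U. dseg h \<phi> 0 = F \<phi>}"

definition is_solution :: "real \<Rightarrow> (real \<Rightarrow> 'a::euclidean_space) set \<Rightarrow> ((real \<Rightarrow> 'a) \<Rightarrow> 'a)
     \<Rightarrow> (real \<Rightarrow> 'a) \<Rightarrow> (real \<Rightarrow> 'a) \<Rightarrow> ereal \<Rightarrow> bool" where
  "is_solution h U F \<phi> x T \<longleftrightarrow> T > 0 \<and>
     (\<exists>x'. (\<forall>t. -h \<le> t \<and> ereal t < T \<longrightarrow>
              (x has_vector_derivative x' t) (at t within {t. -h \<le> t \<and> ereal t < T}))
          \<and> continuous_on {t. -h \<le> t \<and> ereal t < T} x') \<and>
     seg h x 0 = \<phi> \<and>
     (\<forall>t. 0 < t \<and> ereal t < T \<longrightarrow> seg h x t \<in> U \<and> (x has_vector_derivative F (seg h x t)) (at t))"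

end

theory Submission
  imports Defs
begin

theorem lemma5:
  fixes h :: real
    and U Uplus :: "(real \<Rightarrow> 'a::euclidean_space) set"
    and F :: "(real \<Rightarrow> 'a) \<Rightarrow> 'a"
  assumes h_pos: "h > 0"
    and U_open: "open1 h U"
    and S: "condS h U F"
    and Uplus_sub: "Uplus \<subseteq> U"
    and Xplus_ne: "Xset h U F \<inter> Uplus \<noteq> {}"
    and invariant: "\<forall>\<phi>\<in>Xset h U F \<inter> Uplus. \<forall>x T. is_solution h U F \<phi> x T \<longrightarrow>
                      (\<forall>t. 0 \<le> t \<and> ereal t < T \<longrightarrow> seg h x t \<in> Xset h U F \<inter> Uplus)"
    and sLb: "\<forall>B. B \<subseteq> Uplus \<and> bounded1 h B \<longrightarrow>
                 (\<exists>L. \<forall>\<phi>\<in>B. \<forall>\<xi>\<in>B. norm (F \<phi> - F \<xi>) \<le> L * norm0 h (\<lambda>s. \<phi> s - \<xi> s))"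
    and orbits: "\<forall>\<phi>\<in>Xset h U F \<inter> Uplus. \<forall>x T. is_solution h U F \<phi> x T \<longrightarrow>
                   bounded1 h {seg h x t | t. 0 \<le> t \<and> ereal t < T} \<and>
                   closure1 h {seg h x t | t. 0 \<le> t \<and> ereal t < T} \<subseteq> U"
    and F_bdd: "\<forall>B. B \<subseteq> U \<and> bounded0 h B \<longrightarrow> bounded (F ` B)"
    and diss0: "\<exists>K. \<forall>\<phi>\<in>Xset h U F \<inter> Uplus. \<forall>x. is_solution h U F \<phi> x \<infinity> \<longrightarrow>
                   (\<exists>T\<ge>0. \<forall>t\<ge>T. norm0 h (seg h x t) \<le> K)"
  shows "\<exists>K'. \<forall>\<phi>\<in>Xset h U F \<inter> Uplus. \<forall>x. is_solution h U F \<phi> x \<infinity> \<longrightarrow>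
                   (\<exists>t0\<ge>0. \<forall>t\<ge>t0. norm1 h (seg h x t) \<le> K')"
proof -
  obtain K where K: "\<forall>\<phi>\<in>Xset h U F \<inter> Uplus. \<forall>x. is_solution h U F \<phi> x \<infinity> \<longrightarrow>
                   (\<exists>T\<ge>0. \<forall>t\<ge>T. norm0 h (seg h x t) \<le> K)" using diss0 by (elim exE) blast
  define B where "B = {\<psi>\<in>U. norm0 h \<psi> \<le> K}"
  have "bounded0 h B" unfolding bounded0_def B_def by blast
  then have "bounded (F ` B)" using F_bdd[rule_format, of B] B_def by blast
  then obtain M where M: "\<And>\<psi>. \<psi> \<in> B \<Longrightarrow> norm (F \<psi>) \<le> M" by (auto simp: bounded_iff)
  have ne: "{-h..0} \<noteq> {}" using h_pos by simp
  show ?thesis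
  proof (rule exI[of _ "K + M"], intro ballI allI impI)
    fix \<phi> x assume \<phi>: "\<phi> \<in> Xset h U F \<inter> Uplus" and sol: "is_solution h U F \<phi> x \<infinity>"
    obtain T where T: "T \<ge> 0" "\<And>t. t \<ge> T \<Longrightarrow> norm0 h (seg h x t) \<le> K" using K[rule_format, OF \<phi> sol] by blast
    have solU: "\<And>t. 0 < t \<Longrightarrow> seg h x t \<in> U \<and> (x has_vector_derivative F (seg h x t)) (at t)"
    proof -
      fix t :: real assume "0 < t"
      have "\<forall>t. 0 < t \<and> ereal t < \<infinity> \<longrightarrow> seg h x t \<in> U \<and> (x has_vector_derivative F (seg h x t)) (at t)"
        using conjunct2[OF conjunct2[OF conjunct2[OF sol[unfolded is_solution_def]]]] .
      then show "seg h x t \<in> U \<and> (x has_vector_derivative F (seg h x t)) (at t)" using \<open>0 < t\<close> by simp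
    qed
    show "\<exists>t0\<ge>0. \<forall>t\<ge>t0. norm1 h (seg h x t) \<le> K + M"
    proof (rule exI[of _ "T + h + 1"], intro conjI allI impI)
      show "0 \<le> T + h + 1" using T h_pos by simp
      fix t assume t: "T + h + 1 \<le> t"
      have "norm0 h (dseg h (seg h x t)) \<le> M"
        unfolding norm0_def
      proof (rule cSUP_least[OF ne])
        fix s assume s: "s \<in> {-h..0}"
        have pos: "0 < t + s" using s t T by auto
        have inB: "seg h x (t+s) \<in> B" proof -
          have "norm0 h (seg h x (t+s)) \<le> K" using T(2)[of "t+s"] s t h_pos by simp
          then show ?thesis unfolding B_def using solU[OF pos] by blast
        qed
        have d1: "(x has_vector_derivative F (seg h x (t+s))) (at (t+s))" using solU[OF pos] by blast
        have d2: "((\<lambda>r. t + r) has_vector_derivative 1) (at s within {-h..0})"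
          by (auto intro!: derivative_eq_intros)
        have d3: "((x \<circ> (\<lambda>r. t + r)) has_vector_derivative (1::real) *\<^sub>R F (seg h x (t+s))) (at s within {-h..0})"
          by (rule vector_diff_chain_within[OF d2]) (use d1 has_vector_derivative_at_within in blast)
        have d4: "(seg h x t has_vector_derivative F (seg h x (t+s))) (at s within {-h..0})"
          by (rule has_vector_derivative_transform[OF s _ d3[simplified]]) (simp add: seg_def)
        have "dseg h (seg h x t) s = F (seg h x (t+s))"
          unfolding dseg_def using s d4 h_pos vector_derivative_within_cbox[of "-h" 0 s "seg h x t"]
          by simp
        then show "norm (dseg h (seg h x t) s) \<le> M" using M[OF inB] by simp
      qed
      moreover have "norm0 h (seg h x t) \<le> K" using T t h_pos by simp
      ultimately show "norm1 h (seg h x t) \<le> K + M" unfolding norm1_def by simp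
    qed
  qed
qed

end
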